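(* Let $k\ge2$, $r_0>0$, and let $\mathfrak X\subset\mathbb R^k$ be a polar-coordinate grid: choose $M$ points $q_1,\dots,q_M$ on the sphere of radius $r_0$ centered at the origin, containing $k-1$ linearly independent vectors, and radii $0<\mathsf r_1<\dots<\mathsf r_\alpha=r_0$, and let $\mathfrak X=\{(\mathsf r_a/r_0)q_m: 1\le a\le\alpha,1\le m\le M\}$, so $p=M\alpha$ points. Let $\mathcal T^{(k)}_{\mathrm{exact}}$ be the set of rotations $\mathtt O\in SO(k)$ mapping $\mathfrak X$ onto itself, and $\mathcal T_{\mathrm{exact}}$ the set of their companion $p\times p$ matrices. Then $$|\mathcal T^{(k)}_{\mathrm{exact}}|=|\mathcal T_{\mathrm{exact}}|=O(p^{k-1}),$$ and the elements of $\mathcal T_{\mathrm{exact}}$ are permutation matrices; in particular they are orthogonal.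
   Context: An image on the grid is a vector $v\in\mathbb R^p$ whose entries are values at the grid points $x_1,\dots,x_p$. For a rotation $\mathtt O$ mapping $\mathfrak X$ onto itself, its companion matrix is the $p\times p$ matrix $P_{\mathtt O}$ with $(P_{\mathtt O}v)_a=v_b$ where $x_b=\mathtt O^{-1}x_a$, i.e. the matrix implementing the action $v\mapsto\mathtt O\circ v$ of the rotation on discretized images. $O(p^{k-1})$ refers to $p\to\infty$ with $k$ fixed (in fact the proof gives $|\mathcal T^{(k)}_{\mathrm{exact}}|\le M^{k-1}$). *)

theory Defs
  imports "HOL-Analysis.Analysis" "HOL-Combinatorics.Permutations"
begin

text \<open>This fixes an enumeration x_1, ..., x_p of the grid.\<close>
definition grid_point :: "nat \<Rightarrow> real \<Rightarrow> (nat \<Rightarrow> real) \<Rightarrow> (nat \<Rightarrow> real^'n) \<Rightarrow> nat \<Rightarrow> real^'n" where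
  "grid_point M r0 rr q j = (rr (j div M) / r0) *\<^sub>R q (j mod M)"

definition grid :: "nat \<Rightarrow> nat \<Rightarrow> real \<Rightarrow> (nat \<Rightarrow> real) \<Rightarrow> (nat \<Rightarrow> real^'n) \<Rightarrow> (real^'n) set" where
  "grid M alpha r0 rr q = grid_point M r0 rr q ` {..<M * alpha}"

definition polar_grid_data :: "nat \<Rightarrow> nat \<Rightarrow> real \<Rightarrow> (nat \<Rightarrow> real) \<Rightarrow> (nat \<Rightarrow> real^'n) \<Rightarrow> bool" where
  "polar_grid_data M alpha r0 rr q \<longleftrightarrow>
     r0 > 0 \<and> alpha \<ge> 1 \<and>
     inj_on q {..<M} \<and> (\<forall>m<M. norm (q m) = r0) \<and>
     (\<exists>S \<subseteq> q ` {..<M}. card S = CARD('n) - 1 \<and> independent S) \<and>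
     0 < rr 0 \<and> (\<forall>a b. a < b \<and> b < alpha \<longrightarrow> rr a < rr b) \<and> rr (alpha - 1) = r0"

definition rotation :: "real^'n^'n \<Rightarrow> bool" where
  "rotation A \<longleftrightarrow> orthogonal_matrix A \<and> det A = 1"

definition T_exact_k :: "nat \<Rightarrow> nat \<Rightarrow> real \<Rightarrow> (nat \<Rightarrow> real) \<Rightarrow> (nat \<Rightarrow> real^'n) \<Rightarrow> (real^'n^'n) set" where
  "T_exact_k M alpha r0 rr q =
     {A. rotation A \<and> (\<lambda>x. A *v x) ` grid M alpha r0 rr q = grid M alpha r0 rr q}"

text \<open>Companion p x p matrix (indices 0..p-1, zero outside):
  (P v)_a = v_b where x_b = O^{-1} x_a.\<close>
definition companion :: "nat \<Rightarrow> real \<Rightarrow> (nat \<Rightarrow> real) \<Rightarrow> (nat \<Rightarrow> real^'n) \<Rightarrow> nat \<Rightarrow> real^'n^'n \<Rightarrow> (nat \<Rightarrow> nat \<Rightarrow> real)" where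
  "companion M r0 rr q p A = (\<lambda>a b.
     if a < p \<and> b < p \<and> grid_point M r0 rr q b = matrix_inv A *v grid_point M r0 rr q a then 1 else 0)"

definition T_exact :: "nat \<Rightarrow> nat \<Rightarrow> real \<Rightarrow> (nat \<Rightarrow> real) \<Rightarrow> (nat \<Rightarrow> real^'n) \<Rightarrow> (nat \<Rightarrow> nat \<Rightarrow> real) set" where
  "T_exact M alpha r0 rr q = companion M r0 rr q (M * alpha) ` T_exact_k M alpha r0 rr q"

definition permutation_matrix :: "nat \<Rightarrow> (nat \<Rightarrow> nat \<Rightarrow> real) \<Rightarrow> bool" where
  "permutation_matrix p P \<longleftrightarrow>
     (\<exists>\<sigma>. \<sigma> permutes {..<p} \<and> (\<forall>i<p. \<forall>j<p. P i j = (if j = \<sigma> i then 1 else 0)))"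

definition orthogonal_mat :: "nat \<Rightarrow> (nat \<Rightarrow> nat \<Rightarrow> real) \<Rightarrow> bool" where
  "orthogonal_mat p P \<longleftrightarrow>
     (\<forall>i<p. \<forall>j<p. (\<Sum>l<p. P l i * P l j) = (if i = j then 1 else 0)) \<and>
     (\<forall>i<p. \<forall>j<p. (\<Sum>l<p. P i l * P j l) = (if i = j then 1 else 0))"

end

theory Submission
  imports Defs
begin

lemma orth_inner:
  fixes Q :: "real^'n^'n"
  assumes "orthogonal_matrix Q"
  shows "(Q *v x) \<bullet> (Q *v y) = x \<bullet> y"
proof -
  have "orthogonal_transformation (\<lambda>x. Q *v x)"
    using assms by (simp add: orthogonal_transformation_matrix)
  then show ?thesis by (simp add: orthogonal_transformation_def)
qed

lemma fix_span:
  fixes C :: "real^'n^'n"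
  assumes "\<forall>s\<in>S. C *v s = s" "x \<in> span S"
  shows "C *v x = x"
proof -
  have "linear (\<lambda>x. C *v x)" by simp
  moreover have "linear (\<lambda>x::real^'n. x)" by (simp add: linear_iff)
  ultimately show ?thesis using linear_eq_on_span[of "\<lambda>x. C *v x" "\<lambda>x. x" S x] assms by auto
qed

lemma key:
  fixes C :: "real^'n^'n"
  assumes oC: "orthogonal_matrix C" and dC: "det C = 1" and ind: "independent S"
    and cS: "card S = CARD('n) - 1" and fx: "\<forall>s\<in>S. C *v s = s"
  shows "C = mat 1"
proof -
  have "dim S = DIM(real^'n) - 1" using ind cS by (simp add: dim_eq_card_independent)
  then obtain a where a0: "a \<noteq> (0::real^'n)" and spS: "span S = {x. a \<bullet> x = 0}"
    by (rule lowdim_eq_hyperplane)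
  define u where "u = a /\<^sub>R norm a"
  have nu: "norm u = 1" using a0 by (simp add: u_def)
  fix k :: 'n
  obtain Q where oQ: "orthogonal_matrix Q" and Qe: "Q *v (axis k 1) = u"
    using orthogonal_matrix_exists_basis[OF nu] by metis
  define e where "e = (axis k 1 :: real^'n)"
  define D where "D = transpose Q ** C ** Q"
  have QQt: "Q ** transpose Q = mat 1" "transpose Q ** Q = mat 1" using oQ by (auto simp: orthogonal_matrix_def)
  have oD: "orthogonal_matrix D" unfolding D_def
    by (simp add: oQ oC orthogonal_matrix_mul)
  have dQ: "det Q * det Q = 1" using det_orthogonal_matrix[OF oQ] by auto
  have dD: "det D = 1" unfolding D_def by (simp add: det_mul det_transpose dC dQ)
  have Dv: "D *v v = v" if "v $ k = 0" for v
  proof -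
    have "(Q *v v) \<bullet> u = v \<bullet> e" using orth_inner[OF oQ, of v e] Qe e_def by simp
    also have "\<dots> = 0" using that by (simp add: e_def inner_axis)
    finally have "a \<bullet> (Q *v v) = 0" using a0 by (simp add: u_def inner_commute)
    then have "Q *v v \<in> span S" using spS by simp
    then have "C *v (Q *v v) = Q *v v" using fix_span fx by blast
    then have "transpose Q *v (C *v (Q *v v)) = v"
      by (simp add: matrix_vector_mul_assoc QQt)
    then show ?thesis unfolding D_def
      by (simp add: matrix_vector_mul_assoc matrix_mul_assoc)
  qed
  have Dej: "(D *v e) $ j = 0" if "j \<noteq> k" for j
  proof -
    have "(axis j 1 :: real^'n) $ k = 0" using that by (simp add: axis_def)
    then have "D *v axis j 1 = axis j 1" by (rule Dv)
    then have "(D *v e) $ j = (D *v e) \<bullet> (D *v axis j 1)"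
      by (simp add: inner_axis)
    also have "\<dots> = e \<bullet> axis j 1" by (rule orth_inner[OF oD])
    also have "\<dots> = 0" using that by (simp add: e_def inner_axis) (simp add: axis_def)
    finally show ?thesis .
  qed
  define c where "c = (D *v e) $ k"
  have De: "D *v e = c *s e"
  unfolding vec_eq_iff proof (intro allI)
    fix i
    show "(D *v e) $ i = (c *s e) $ i"
    proof (cases "i = k")
      case True then show ?thesis by (simp add: c_def e_def axis_def)
    next
      case False then show ?thesis using Dej[OF False] by (simp add: e_def axis_def)
    qed
  qed
  have "norm (D *v e) = norm e" using orth_inner[OF oD, of e e] by (simp add: norm_eq_sqrt_inner)
  then have "\<bar>c\<bar> = 1" using De by (simp add: e_def scalar_mult_eq_scaleR)
  then consider "c = 1" | "c = -1" by linarith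
  then have "D = mat 1"
  proof cases
    case 1
    have "D *v x = x" for x
    proof -
      have x: "x = (x $ k) *s e + (x - (x $ k) *s e)" by simp
      have "(x - (x $ k) *s e) $ k = 0" by (simp add: e_def)
      then have "D *v (x - (x $ k) *s e) = x - (x $ k) *s e" by (rule Dv)
      moreover have "D *v ((x $ k) *s e) = (x $ k) *s e" using De 1
        by (simp add: vector_scalar_commute)
      ultimately show ?thesis
        by (metis x matrix_vector_right_distrib)
    qed
    then show ?thesis by (simp add: matrix_eq)
  next
    case 2
    have Dij: "D $ i $ j = (if i = j then (if j = k then -1 else 1) else 0)" for i j
    proof -
      have "D $ i $ j = (D *v axis j 1) $ i"
        by (simp add: matrix_vector_mult_basis column_def)
      also have "\<dots> = (if i = j then (if j = k then -1 else 1) else 0)"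
      proof (cases "j = k")
        case True
        then show ?thesis using De 2 by (simp add: e_def axis_def)
      next
        case False
        then show ?thesis using Dv[of "axis j 1"] by (simp add: axis_def)
      qed
      finally show ?thesis .
    qed
    have "det D = (\<Prod>i\<in>UNIV. D $ i $ i)" by (rule det_diagonal) (simp add: Dij)
    also have "\<dots> = (\<Prod>i\<in>UNIV. if i = k then -1 else (1::real))" by (simp add: Dij)
    also have "\<dots> = -1" by (simp add: prod.If_cases)
    finally show ?thesis using dD by simp
  qed
  then show "C = mat 1" using QQt unfolding D_def
    by (metis matrix_mul_assoc matrix_mul_lid matrix_mul_rid)
qed

lemma inv_orth:
  fixes A :: "real^'n^'n"
  assumes "orthogonal_matrix A"
  shows "matrix_inv A = transpose A"
proof -
  have h: "A ** transpose A = mat 1 \<and> transpose A ** A = mat 1"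
    using assms by (auto simp: orthogonal_matrix_def)
  then have "A ** matrix_inv A = mat 1 \<and> matrix_inv A ** A = mat 1"
    unfolding matrix_inv_def by (rule someI)
  then have "matrix_inv A = (matrix_inv A ** A) ** transpose A"
    using h by (metis matrix_mul_assoc matrix_mul_rid)
  then show ?thesis using \<open>A ** matrix_inv A = mat 1 \<and> matrix_inv A ** A = mat 1\<close>
    by (simp add: matrix_mul_lid)
qed

lemma rot_eq:
  fixes A B :: "real^'n^'n"
  assumes rA: "rotation A" and rB: "rotation B" and ind: "independent S"
    and cS: "card S = CARD('n) - 1" and eq: "\<forall>s\<in>S. A *v s = B *v s"
  shows "A = B"
proof -
  have oA: "orthogonal_matrix A" "det A = 1" and oB: "orthogonal_matrix B" "det B = 1"
    using rA rB by (auto simp: rotation_def)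
  define C where "C = transpose B ** A"
  have "orthogonal_matrix C" unfolding C_def using oA oB by (simp add: orthogonal_matrix_mul)
  moreover have "det C = 1" unfolding C_def using oA oB by (simp add: det_mul det_transpose)
  moreover have "\<forall>s\<in>S. C *v s = s"
  proof
    fix s assume "s \<in> S"
    then have "C *v s = transpose B *v (B *v s)" using eq by (simp add: C_def matrix_vector_mul_assoc[symmetric])
    also have "\<dots> = s" using oB by (simp add: matrix_vector_mul_assoc orthogonal_matrix_def)
    finally show "C *v s = s" .
  qed
  ultimately have "C = mat 1" using key ind cS by blast
  then have "B ** C = B" by simp
  then show ?thesis using oB unfolding C_def
    by (metis matrix_mul_assoc matrix_mul_lid orthogonal_matrix_def)
qed

lemma perm_orth:
  assumes "permutation_matrix p P"
  shows "orthogonal_mat p P"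
proof -
  obtain \<sigma> where sp: "\<sigma> permutes {..<p}" and P: "\<forall>i<p. \<forall>j<p. P i j = (if j = \<sigma> i then 1 else 0)"
    using assms by (auto simp: permutation_matrix_def)
  have A: "(\<Sum>l<p. P l i * P l j) = (if i = j then 1 else 0)" if "i < p" "j < p" for i j
  proof -
    have "(\<Sum>l<p. P l i * P l j) = (\<Sum>l<p. if l = inv \<sigma> i then (if i = j then 1 else 0) else 0)"
    proof (rule sum.cong[OF refl])
      fix l assume "l \<in> {..<p}"
      then show "P l i * P l j = (if l = inv \<sigma> i then (if i = j then 1 else 0) else 0)"
        using P that permutes_inv_eq[OF sp, of i l] by auto
    qed
    also have "\<dots> = (if i = j then 1 else 0)"
      using permutes_in_image[OF permutes_inv[OF sp], of i] that by simp
    finally show ?thesis .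
  qed
  have B: "(\<Sum>l<p. P i l * P j l) = (if i = j then 1 else 0)" if "i < p" "j < p" for i j
  proof -
    have "(\<Sum>l<p. P i l * P j l) = (\<Sum>l<p. if l = \<sigma> i then (if \<sigma> i = \<sigma> j then 1 else 0) else 0)"
      by (rule sum.cong[OF refl]) (use P that in auto)
    also have "\<dots> = (if \<sigma> i = \<sigma> j then 1 else 0)"
      using permutes_in_image[OF sp, of i] that by simp
    also have "\<dots> = (if i = j then 1 else 0)"
      using permutes_inj[OF sp] by (auto dest: injD)
    finally show ?thesis .
  qed
  show ?thesis unfolding orthogonal_mat_def using A B by blast
qed

lemma rr_pos:
  assumes "polar_grid_data M alpha r0 rr q" "a < alpha"
  shows "rr a > 0"
proof (cases a)
  case 0 then show ?thesis using assms unfolding polar_grid_data_def by auto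
next
  case (Suc n)
  then have "rr 0 < rr a" using assms unfolding polar_grid_data_def by auto
  then show ?thesis using assms unfolding polar_grid_data_def by auto
qed

lemma M_pos:
  assumes "polar_grid_data M alpha r0 rr (q :: nat \<Rightarrow> real^'n)" "CARD('n) \<ge> 2"
  shows "M > 0"
proof (rule ccontr)
  assume "\<not> M > 0"
  then have "q ` {..<M} = {}" by auto
  then show False using assms unfolding polar_grid_data_def by auto
qed

lemma norm_gp:
  assumes "polar_grid_data M alpha r0 rr q" "j < M * alpha"
  shows "norm (grid_point M r0 rr q j) = rr (j div M)"
proof -
  have M: "M > 0" using assms(2) by (cases M) auto
  have jd: "j div M < alpha" using assms(2) M by (simp add: div_less_iff_less_mult mult.commute)
  have "j mod M < M" using M by simp
  then have "norm (q (j mod M)) = r0" "r0 > 0" using assms(1) unfolding polar_grid_data_def by auto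
  moreover have "rr (j div M) > 0" using rr_pos[OF assms(1) jd] .
  ultimately show ?thesis by (simp add: grid_point_def)
qed

lemma gp_inj:
  assumes "polar_grid_data M alpha r0 rr q"
  shows "inj_on (grid_point M r0 rr q) {..<M * alpha}"
proof
  fix a b assume a: "a \<in> {..<M * alpha}" and b: "b \<in> {..<M * alpha}"
    and e: "grid_point M r0 rr q a = grid_point M r0 rr q b"
  have M: "M > 0" using a by (cases M) auto
  have ad: "a div M < alpha" "b div M < alpha" using a b M by (auto simp: div_less_iff_less_mult mult.commute)
  have "rr (a div M) = rr (b div M)" using norm_gp[OF assms] a b e by (metis lessThan_iff)
  moreover have mono: "\<forall>x y. x < y \<and> y < alpha \<longrightarrow> rr x < rr y" using assms unfolding polar_grid_data_def by blast
  ultimately have d: "a div M = b div M" using ad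
    by (metis linorder_neq_iff less_irrefl)
  have "rr (a div M) / r0 \<noteq> 0" using rr_pos[OF assms ad(1)] assms unfolding polar_grid_data_def by auto
  then have "q (a mod M) = q (b mod M)" using e d by (simp add: grid_point_def)
  then have "a mod M = b mod M" using assms M unfolding polar_grid_data_def
    by (meson inj_onD lessThan_iff mod_less_divisor)
  then show "a = b" using d by (metis div_mult_mod_eq)
qed

lemma gp_top:
  assumes "polar_grid_data M alpha r0 rr q" "m < M"
  shows "grid_point M r0 rr q ((alpha - 1) * M + m) = q m" "(alpha - 1) * M + m < M * alpha"
proof -
  have al: "alpha \<ge> 1" "r0 > 0" "rr (alpha - 1) = r0" using assms unfolding polar_grid_data_def by auto
  show "grid_point M r0 rr q ((alpha - 1) * M + m) = q m"
    using assms(2) al by (simp add: grid_point_def)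
  have "(alpha - 1) * M + m < (alpha - 1) * M + M" using assms(2) by simp
  also have "\<dots> = M * alpha" using al by (cases alpha) auto
  finally show "(alpha - 1) * M + m < M * alpha" .
qed

lemma maps_Q:
  assumes pg: "polar_grid_data M alpha r0 rr q" and A: "A \<in> T_exact_k M alpha r0 rr q" and m: "m < M"
  shows "A *v q m \<in> q ` {..<M}"
proof -
  let ?g = "grid_point M r0 rr q"
  have rot: "orthogonal_matrix A" using A by (simp add: T_exact_k_def rotation_def)
  have img: "(\<lambda>x. A *v x) ` grid M alpha r0 rr q = grid M alpha r0 rr q" using A by (simp add: T_exact_k_def)
  have "q m \<in> grid M alpha r0 rr q" using gp_top[OF pg m] unfolding grid_def by (metis image_eqI lessThan_iff)
  then have "A *v q m \<in> grid M alpha r0 rr q" using img by blast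
  then obtain j where j: "j < M * alpha" "A *v q m = ?g j" unfolding grid_def by auto
  have M: "M > 0" using m by simp
  have jd: "j div M < alpha" using j M by (simp add: div_less_iff_less_mult mult.commute)
  have "norm (A *v q m) = norm (q m)" using orth_inner[OF rot, of "q m" "q m"] by (simp add: norm_eq_sqrt_inner)
  also have "\<dots> = r0" using pg m unfolding polar_grid_data_def by auto
  finally have "rr (j div M) = r0" using norm_gp[OF pg j(1)] j(2) by simp
  moreover have "rr (alpha - 1) = r0" "alpha \<ge> 1" using pg unfolding polar_grid_data_def by auto
  moreover have mono: "\<forall>x y. x < y \<and> y < alpha \<longrightarrow> rr x < rr y" using pg unfolding polar_grid_data_def by blast
  ultimately have "j div M = alpha - 1"
  proof -
    have "\<not> j div M < alpha - 1"
      using mono \<open>rr (j div M) = r0\<close> \<open>rr (alpha - 1) = r0\<close> \<open>alpha \<ge> 1\<close> by force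
    then show ?thesis using jd by linarith
  qed
  then have "?g j = q (j mod M)" using \<open>rr (alpha - 1) = r0\<close> pg unfolding polar_grid_data_def
    by (simp add: grid_point_def)
  then show ?thesis using j(2) M by auto
qed

lemma inv_img:
  assumes pg: "polar_grid_data M alpha r0 rr q" and A: "A \<in> T_exact_k M alpha r0 rr q" and a: "a < M * alpha"
  shows "\<exists>b < M * alpha. grid_point M r0 rr q b = matrix_inv A *v grid_point M r0 rr q a"
proof -
  let ?g = "grid_point M r0 rr q"
  have rot: "orthogonal_matrix A" using A by (simp add: T_exact_k_def rotation_def)
  have img: "(\<lambda>x. A *v x) ` grid M alpha r0 rr q = grid M alpha r0 rr q" using A by (simp add: T_exact_k_def)
  have "?g a \<in> grid M alpha r0 rr q" using a unfolding grid_def by auto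
  then obtain y where y: "y \<in> grid M alpha r0 rr q" "?g a = A *v y" using img by force
  have "matrix_inv A *v ?g a = y" using y(2) rot
    by (simp add: inv_orth matrix_vector_mul_assoc orthogonal_matrix_def)
  then show ?thesis using y(1) unfolding grid_def by auto
qed

lemma rotation_transpose:
  fixes A :: "real^'n^'n"
  shows "rotation A \<Longrightarrow> rotation (transpose A)"
  by (simp add: rotation_def det_transpose)

lemma companion_perm:
  assumes pg: "polar_grid_data M alpha r0 rr q" and A: "A \<in> T_exact_k M alpha r0 rr q"
  shows "permutation_matrix (M * alpha) (companion M r0 rr q (M * alpha) A)"
proof -
  let ?g = "grid_point M r0 rr q"
  let ?p = "M * alpha"
  let ?Ai = "matrix_inv A"
  have rot: "orthogonal_matrix A" using A by (simp add: T_exact_k_def rotation_def)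
  have Ai: "?Ai = transpose A" by (rule inv_orth[OF rot])
  have inj: "inj_on ?g {..<?p}" by (rule gp_inj[OF pg])
  have ex1: "\<exists>!b. b < ?p \<and> ?g b = ?Ai *v ?g i" if ip: "i < ?p" for i
  proof -
    obtain b where "b < ?p" "?g b = ?Ai *v ?g i" using inv_img[OF pg A ip] by blast
    then show ?thesis using inj by (metis inj_onD lessThan_iff)
  qed
  define \<sigma> where "\<sigma> i = (if i < ?p then (THE b. b < ?p \<and> ?g b = ?Ai *v ?g i) else i)" for i
  have \<sigma>: "\<sigma> i < ?p \<and> ?g (\<sigma> i) = ?Ai *v ?g i" if "i < ?p" for i
    using theI'[OF ex1[OF that]] that by (simp add: \<sigma>_def)
  have \<sigma>eq: "?g j = ?Ai *v ?g i \<longleftrightarrow> j = \<sigma> i" if "i < ?p" "j < ?p" for i j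
    using \<sigma>[OF that(1)] that(2) inj by (metis inj_onD lessThan_iff)
  have injs: "inj_on \<sigma> {..<?p}"
  proof
    fix i j assume i: "i \<in> {..<?p}" and j: "j \<in> {..<?p}" and e: "\<sigma> i = \<sigma> j"
    then have "?Ai *v ?g i = ?Ai *v ?g j" using \<sigma> by (metis lessThan_iff)
    then have "A *v (?Ai *v ?g i) = A *v (?Ai *v ?g j)" by simp
    moreover have "A *v (?Ai *v x) = x" for x using rot unfolding Ai
      by (metis matrix_vector_mul_assoc orthogonal_matrix_def matrix_vector_mul_lid)
    ultimately have "?g i = ?g j" by simp
    then show "i = j" using inj i j by (meson inj_onD)
  qed
  have "\<sigma> ` {..<?p} \<subseteq> {..<?p}" using \<sigma> by auto
  then have "\<sigma> ` {..<?p} = {..<?p}" using injs by (simp add: endo_inj_surj)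
  then have "bij_betw \<sigma> {..<?p} {..<?p}" using injs by (simp add: bij_betw_def)
  then have "\<sigma> permutes {..<?p}" by (rule bij_imp_permutes) (simp add: \<sigma>_def)
  moreover have "\<forall>i<?p. \<forall>j<?p. companion M r0 rr q ?p A i j = (if j = \<sigma> i then 1 else 0)"
    using \<sigma>eq by (simp add: companion_def)
  ultimately show ?thesis unfolding permutation_matrix_def by blast
qed

theorem propositionA1:
  assumes "CARD('n) \<ge> 2"
  shows "\<exists>C::real. \<forall>M alpha r0 rr (q :: nat \<Rightarrow> real^'n).
           polar_grid_data M alpha r0 rr q \<longrightarrow>
             finite (T_exact_k M alpha r0 rr q) \<and>
             card (T_exact_k M alpha r0 rr q) = card (T_exact M alpha r0 rr q) \<and>
             real (card (T_exact M alpha r0 rr q)) \<le> C * real (M * alpha) ^ (CARD('n) - 1) \<and>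
             (\<forall>P \<in> T_exact M alpha r0 rr q.
                permutation_matrix (M * alpha) P \<and> orthogonal_mat (M * alpha) P)"
proof (intro exI[of _ 1] allI impI)
  fix M alpha r0 rr and q :: "nat \<Rightarrow> real^'n"
  assume pg: "polar_grid_data M alpha r0 rr q"
  let ?T = "T_exact_k M alpha r0 rr q"
  let ?Q = "q ` {..<M}"
  let ?g = "grid_point M r0 rr q"
  let ?p = "M * alpha"
  obtain S where SQ: "S \<subseteq> ?Q" and cS: "card S = CARD('n) - 1" and ind: "independent S"
    using pg unfolding polar_grid_data_def by blast
  have finS: "finite S" using SQ finite_subset by blast
  have rotT: "rotation A" if "A \<in> ?T" for A using that by (simp add: T_exact_k_def)
  define \<Phi> where "\<Phi> A = restrict (\<lambda>s. A *v s) S" for A :: "real^'n^'n"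
  have sub: "\<Phi> ` ?T \<subseteq> PiE S (\<lambda>_. ?Q)"
  proof
    fix f assume "f \<in> \<Phi> ` ?T"
    then obtain A where A: "A \<in> ?T" "f = \<Phi> A" by blast
    have "A *v s \<in> ?Q" if "s \<in> S" for s
      using that SQ maps_Q[OF pg A(1)] by blast
    then show "f \<in> PiE S (\<lambda>_. ?Q)" using A(2) by (auto simp: \<Phi>_def)
  qed
  have injP: "inj_on \<Phi> ?T"
  proof
    fix A B assume A: "A \<in> ?T" and B: "B \<in> ?T" and e: "\<Phi> A = \<Phi> B"
    have "\<forall>s\<in>S. A *v s = B *v s"
    proof
      fix s assume "s \<in> S"
      then show "A *v s = B *v s" using fun_cong[OF e, of s] by (simp add: \<Phi>_def)
    qed
    then show "A = B" using rot_eq[OF rotT[OF A] rotT[OF B] ind cS] by blast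
  qed
  have finPi: "finite (PiE S (\<lambda>_. ?Q))" using finS by (simp add: finite_PiE)
  have cardPi: "card (PiE S (\<lambda>_. ?Q)) = M ^ (CARD('n) - 1)"
  proof -
    have "card ?Q = M" using pg unfolding polar_grid_data_def by (simp add: card_image)
    then show ?thesis using finS cS by (simp add: card_PiE)
  qed
  have finT: "finite ?T"
    using finite_subset[OF sub finPi] injP finite_imageD by blast
  have cardT: "card ?T \<le> M ^ (CARD('n) - 1)"
  proof -
    have "card ?T = card (\<Phi> ` ?T)" using injP by (simp add: card_image)
    also have "\<dots> \<le> card (PiE S (\<lambda>_. ?Q))" using card_mono[OF finPi sub] .
    finally show ?thesis using cardPi by simp
  qed
  have injC: "inj_on (companion M r0 rr q ?p) ?T"
  proof
    fix A B assume A: "A \<in> ?T" and B: "B \<in> ?T" and e: "companion M r0 rr q ?p A = companion M r0 rr q ?p B"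
    have oA: "orthogonal_matrix A" "orthogonal_matrix B" using rotT[OF A] rotT[OF B] by (auto simp: rotation_def)
    have "\<forall>s\<in>S. transpose A *v s = transpose B *v s"
    proof
      fix s assume "s \<in> S"
      then obtain m where m: "m < M" "s = q m" using SQ by blast
      let ?a = "(alpha - 1) * M + m"
      have ga: "?g ?a = s" "?a < ?p" using gp_top[OF pg m(1)] m(2) by auto
      obtain b where b: "b < ?p" "?g b = matrix_inv A *v ?g ?a" using inv_img[OF pg A ga(2)] by blast
      then have "companion M r0 rr q ?p A ?a b = 1" using ga by (simp add: companion_def)
      then have "companion M r0 rr q ?p B ?a b = 1" using e by simp
      then have "?g b = matrix_inv B *v ?g ?a" by (simp add: companion_def split: if_splits)
      then show "transpose A *v s = transpose B *v s" using b ga oA by (simp add: inv_orth)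
    qed
    then have "transpose A = transpose B"
      using rot_eq[OF rotation_transpose[OF rotT[OF A]] rotation_transpose[OF rotT[OF B]] ind cS] by blast
    then show "A = B" by (metis transpose_transpose)
  qed
  have eqcard: "card ?T = card (T_exact M alpha r0 rr q)"
    unfolding T_exact_def using injC by (simp add: card_image)
  have "M \<le> ?p" using pg unfolding polar_grid_data_def by simp
  then have "real M \<le> real ?p" by linarith
  then have "real M ^ (CARD('n) - 1) \<le> real ?p ^ (CARD('n) - 1)"
    by (rule power_mono) simp
  then have "real (M ^ (CARD('n) - 1)) \<le> 1 * real ?p ^ (CARD('n) - 1)"
    by simp
  then have bound: "real (card (T_exact M alpha r0 rr q)) \<le> 1 * real ?p ^ (CARD('n) - 1)"
    using cardT eqcard by (metis of_nat_le_iff order_trans)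
  have perms: "\<forall>P \<in> T_exact M alpha r0 rr q. permutation_matrix ?p P \<and> orthogonal_mat ?p P"
    unfolding T_exact_def using companion_perm[OF pg] perm_orth by blast
  show "finite ?T \<and> card ?T = card (T_exact M alpha r0 rr q) \<and>
        real (card (T_exact M alpha r0 rr q)) \<le> 1 * real ?p ^ (CARD('n) - 1) \<and>
        (\<forall>P \<in> T_exact M alpha r0 rr q. permutation_matrix ?p P \<and> orthogonal_mat ?p P)"
    using finT eqcard bound perms by blast
qed

end
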